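(* Let $k$ be a field of prime characteristic $p$. Let $H_1=\{x_1^p\}^S$ and $S^{(p)}_1=\{S^{(p)}\}^S$, where $S^{(p)}=S^{(p)}(x_1,\ldots,x_p)=\sum_{\sigma\in\Sigma_p}\prod_{i=1}^p x_{\sigma(i)}$. Then $S^{(p)}_1\subseteq H_1$.
   Context: $X=\{x_1,x_2,\ldots\}$ is countably infinite; $k_0\langle X\rangle$ is the free associative (non-unital) $k$-algebra on $X$. A $T$-space is a $k$-subspace of $k_0\langle X\rangle$ invariant under every algebra endomorphism of $k_0\langle X\rangle$; $\{f\}^S$ is the $T$-space generated by $f$. $\Sigma_p$ is the symmetric group on $p$ letters. *)

theory Defs
  imports Main "HOL-Combinatorics.Permutations" "HOL-Computational_Algebra.Primes"
begin

text \<open>The free associative non-unital k-algebra on X = {x_1, x_2, ...}: elements are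
  finitely supported coefficient functions on words (lists of variable indices),
  with zero coefficient on the empty word. The variable x_i is the index i.\<close>

definition ncpoly :: "(nat list \<Rightarrow> 'k::field) set" where
  "ncpoly = {f. finite {w. f w \<noteq> 0} \<and> f [] = 0}"

definition nc_add :: "(nat list \<Rightarrow> 'k::field) \<Rightarrow> (nat list \<Rightarrow> 'k) \<Rightarrow> (nat list \<Rightarrow> 'k)" where
  "nc_add f g = (\<lambda>w. f w + g w)"

definition nc_smult :: "'k::field \<Rightarrow> (nat list \<Rightarrow> 'k) \<Rightarrow> (nat list \<Rightarrow> 'k)" where
  "nc_smult c f = (\<lambda>w. c * f w)"

definition nc_zero :: "nat list \<Rightarrow> 'k::field" where
  "nc_zero = (\<lambda>w. 0)"

definition nc_mult :: "(nat list \<Rightarrow> 'k::field) \<Rightarrow> (nat list \<Rightarrow> 'k) \<Rightarrow> (nat list \<Rightarrow> 'k)" where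
  "nc_mult f g = (\<lambda>w. \<Sum>i\<le>length w. f (take i w) * g (drop i w))"

definition nc_endo :: "((nat list \<Rightarrow> 'k::field) \<Rightarrow> (nat list \<Rightarrow> 'k)) \<Rightarrow> bool" where
  "nc_endo \<phi> \<longleftrightarrow> \<phi> ` ncpoly \<subseteq> ncpoly
     \<and> (\<forall>f\<in>ncpoly. \<forall>g\<in>ncpoly. \<phi> (nc_add f g) = nc_add (\<phi> f) (\<phi> g))
     \<and> (\<forall>c. \<forall>f\<in>ncpoly. \<phi> (nc_smult c f) = nc_smult c (\<phi> f))
     \<and> (\<forall>f\<in>ncpoly. \<forall>g\<in>ncpoly. \<phi> (nc_mult f g) = nc_mult (\<phi> f) (\<phi> g))"

definition T_space :: "(nat list \<Rightarrow> 'k::field) set \<Rightarrow> bool" where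
  "T_space V \<longleftrightarrow> V \<subseteq> ncpoly \<and> nc_zero \<in> V
     \<and> (\<forall>f\<in>V. \<forall>g\<in>V. nc_add f g \<in> V)
     \<and> (\<forall>c. \<forall>f\<in>V. nc_smult c f \<in> V)
     \<and> (\<forall>\<phi>. nc_endo \<phi> \<longrightarrow> \<phi> ` V \<subseteq> V)"

definition T_gen :: "(nat list \<Rightarrow> 'k::field) \<Rightarrow> (nat list \<Rightarrow> 'k) set" where
  "T_gen f = \<Inter> {V. T_space V \<and> f \<in> V}"

definition nc_monom :: "nat list \<Rightarrow> (nat list \<Rightarrow> 'k::field)" where
  "nc_monom u = (\<lambda>w. if w = u then 1 else 0)"

definition x1_pow :: "nat \<Rightarrow> (nat list \<Rightarrow> 'k::field)" where
  "x1_pow p = nc_monom (replicate p 1)"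

definition S_poly :: "nat \<Rightarrow> (nat list \<Rightarrow> 'k::field)" where
  "S_poly p = (\<lambda>w. \<Sum>\<sigma>\<in>{\<sigma>. \<sigma> permutes {1..p}}. nc_monom (map \<sigma> [1..<p+1]) w)"

end

theory Submission imports Defs begin

definition subst_map :: "(nat \<Rightarrow> nat \<Rightarrow> bool) \<Rightarrow> (nat list \<Rightarrow> 'k::field) \<Rightarrow> (nat list \<Rightarrow> 'k)" where
  "subst_map R f = (\<lambda>w. \<Sum>u\<in>{u. list_all2 R u w}. f u)"

lemma fin_fwd: assumes "\<And>j. finite {i. R j i}" shows "finite {w. list_all2 R u w}"
proof (induction u)
  case Nil then show ?case by simp
next
  case (Cons a u)
  have "{w. list_all2 R (a#u) w} = (\<lambda>(x,ys). x#ys) ` ({x. R a x} \<times> {ys. list_all2 R u ys})"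
    by (auto simp: list_all2_Cons1)
  then show ?case using Cons assms by simp
qed

lemma fin_bwd: assumes "\<And>i. finite {j. R j i}" shows "finite {u. list_all2 R u w}"
proof (induction w)
  case Nil then show ?case by simp
next
  case (Cons a w)
  have "{u. list_all2 R u (a#w)} = (\<lambda>(x,ys). x#ys) ` ({x. R x a} \<times> {ys. list_all2 R ys w})"
    by (auto simp: list_all2_Cons2)
  then show ?case using Cons assms by simp
qed

lemma subst_mult:
  assumes fb: "\<And>i. finite {j. R j i}"
  shows "subst_map R (nc_mult f g) = nc_mult (subst_map R f) (subst_map R g)"
proof
  fix w
  let ?U = "\<lambda>w. {u. list_all2 R u w}"
  have "subst_map R (nc_mult f g) w = (\<Sum>u\<in>?U w. \<Sum>i\<le>length w. f (take i u) * g (drop i u))"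
    unfolding subst_map_def nc_mult_def
    by (rule sum.cong) (auto dest: list_all2_lengthD)
  also have "\<dots> = (\<Sum>i\<le>length w. \<Sum>u\<in>?U w. f (take i u) * g (drop i u))"
    by (rule sum.swap)
  also have "\<dots> = (\<Sum>i\<le>length w. subst_map R f (take i w) * subst_map R g (drop i w))"
  proof (rule sum.cong[OF refl])
    fix i assume i: "i \<in> {..length w}"
    have "(\<Sum>u\<in>?U w. f (take i u) * g (drop i u))
        = (\<Sum>ab\<in>?U (take i w) \<times> ?U (drop i w). f (fst ab) * g (snd ab))"
    proof (rule sum.reindex_bij_witness[where i="\<lambda>(a,b). a @ b" and j="\<lambda>u. (take i u, drop i u)"])
      fix ab assume "ab \<in> ?U (take i w) \<times> ?U (drop i w)"
      then obtain a b where ab: "ab = (a,b)" "list_all2 R a (take i w)" "list_all2 R b (drop i w)" by auto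
      then have la: "length a = i" using i by (auto dest: list_all2_lengthD)
      show "(case ab of (a, b) \<Rightarrow> a @ b) \<in> ?U w"
        using ab list_all2_appendI[OF ab(2,3)] by simp
      show "(take i (case ab of (a, b) \<Rightarrow> a @ b), drop i (case ab of (a, b) \<Rightarrow> a @ b)) = ab"
        using ab la by simp
    next
      fix u assume "u \<in> ?U w"
      then show "(case (take i u, drop i u) of (a, b) \<Rightarrow> a @ b) = u" by simp
      show "(take i u, drop i u) \<in> ?U (take i w) \<times> ?U (drop i w)"
        using \<open>u \<in> ?U w\<close> by (auto intro: list_all2_takeI list_all2_dropI)
      show "f (fst (take i u, drop i u)) * g (snd (take i u, drop i u)) = f (take i u) * g (drop i u)"
        by simp
    qed
    also have "\<dots> = subst_map R f (take i w) * subst_map R g (drop i w)"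
      unfolding subst_map_def sum_product sum.cartesian_product by (rule sum.cong) auto
    finally show "(\<Sum>u\<in>?U w. f (take i u) * g (drop i u)) = subst_map R f (take i w) * subst_map R g (drop i w)" .
  qed
  also have "\<dots> = nc_mult (subst_map R f) (subst_map R g) w"
    unfolding nc_mult_def by simp
  finally show "subst_map R (nc_mult f g) w = nc_mult (subst_map R f) (subst_map R g) w" .
qed

lemma subst_endo:
  assumes ff: "\<And>j. finite {i. R j i}" and fb: "\<And>i. finite {j. R j i}"
  shows "nc_endo (subst_map R :: (nat list \<Rightarrow> 'k::field) \<Rightarrow> _)"
  unfolding nc_endo_def
proof (intro conjI ballI allI)
  show "subst_map R ` ncpoly \<subseteq> (ncpoly :: (nat list \<Rightarrow> 'k) set)"
  proof
    fix h :: "nat list \<Rightarrow> 'k" assume "h \<in> subst_map R ` ncpoly"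
    then obtain f where f: "f \<in> ncpoly" "h = subst_map R f" by auto
    have "{w. h w \<noteq> 0} \<subseteq> (\<Union>u\<in>{u. f u \<noteq> 0}. {w. list_all2 R u w})"
    proof
      fix w assume "w \<in> {w. h w \<noteq> 0}"
      then have "(\<Sum>u\<in>{u. list_all2 R u w}. f u) \<noteq> 0" using f by (simp add: subst_map_def)
      then obtain u where "list_all2 R u w" "f u \<noteq> 0" by (meson mem_Collect_eq sum.neutral)
      then show "w \<in> (\<Union>u\<in>{u. f u \<noteq> 0}. {w. list_all2 R u w})" by auto
    qed
    moreover have "finite (\<Union>u\<in>{u. f u \<noteq> 0}. {w. list_all2 R u w})"
      using f(1) fin_fwd[OF ff] by (auto simp: ncpoly_def)
    ultimately have "finite {w. h w \<noteq> 0}" by (rule finite_subset)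
    moreover have "h [] = 0" using f by (simp add: subst_map_def ncpoly_def)
    ultimately show "h \<in> ncpoly" by (simp add: ncpoly_def)
  qed
next
  fix f g :: "nat list \<Rightarrow> 'k"
  show "subst_map R (nc_add f g) = nc_add (subst_map R f) (subst_map R g)"
    by (simp add: subst_map_def nc_add_def sum.distrib)
  show "subst_map R (nc_mult f g) = nc_mult (subst_map R f) (subst_map R g)"
    by (rule subst_mult[OF fb])
next
  fix c :: 'k and f :: "nat list \<Rightarrow> 'k"
  show "subst_map R (nc_smult c f) = nc_smult c (subst_map R f)"
    by (simp add: subst_map_def nc_smult_def sum_distrib_left)
qed

definition RC :: "nat set \<Rightarrow> nat \<Rightarrow> nat \<Rightarrow> bool" where
  "RC D j i = (if j = 1 then i \<in> D else i = j)"

lemma RC_fin1: "finite D \<Longrightarrow> finite {i. RC D j i}"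
  by (rule finite_subset[of _ "insert j D"]) (auto simp: RC_def)

lemma RC_fin2: "finite {j. RC D j i}"
  by (rule finite_subset[of _ "{1, i}"]) (auto simp: RC_def split: if_splits)

lemma list_all2_replicate_left:
  "list_all2 P (replicate n x) w \<longleftrightarrow> length w = n \<and> (\<forall>y\<in>set w. P x y)"
proof (induction w arbitrary: n)
  case Nil then show ?case by auto
next
  case (Cons a w) then show ?case by (cases n) auto
qed

lemma subst_x1:
  "subst_map (RC D) (x1_pow p :: nat list \<Rightarrow> 'k::field) w = (if length w = p \<and> set w \<subseteq> D then 1 else 0)"
proof -
  have "subst_map (RC D) (x1_pow p :: nat list \<Rightarrow> 'k::field) w
      = (\<Sum>u\<in>{u. list_all2 (RC D) u w}. if u = replicate p 1 then 1 else 0)"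
    by (simp add: subst_map_def x1_pow_def nc_monom_def)
  also have "\<dots> = (if list_all2 (RC D) (replicate p 1) w then 1 else 0)"
    using fin_bwd[of "RC D" w, OF RC_fin2] by (simp add: sum.delta)
  also have "\<dots> = (if length w = p \<and> set w \<subseteq> D then 1 else 0)"
    by (auto simp: list_all2_replicate_left RC_def)
  finally show ?thesis .
qed

lemma alt_sum:
  assumes "finite T"
  shows "(\<Sum>C\<in>Pow T. (-1::'k::ring_1) ^ card C) = (if T = {} then 1 else 0)"
proof (cases "T = {}")
  case True then show ?thesis by simp
next
  case False
  have "card {T'. T' \<subseteq> T \<and> {} \<subseteq> T' \<and> even (card T')} = card {T'. T' \<subseteq> T \<and> {} \<subseteq> T' \<and> odd (card T')}"
    by (rule card_subsupersets_even_odd) (use assms False in auto)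
  then have "card {x. x \<in> Pow T \<and> even (card x)} = card {x. x \<in> Pow T \<and> odd (card x)}"
    by simp
  then have "(\<Sum>C\<in>Pow T. (-1::'k::ring_1) ^ card C) = 0"
    by (intro sum_alternating_cancels) (use assms in auto)
  then show ?thesis using False by simp
qed

lemma rhs_eval:
  fixes S :: "nat set" and w :: "nat list"
  assumes "finite S"
  shows "(\<Sum>C\<in>Pow S. (-1::'k::ring_1) ^ card C * (if length w = p \<and> set w \<subseteq> S - C then 1 else 0))
       = (if length w = p \<and> set w = S then 1 else 0)"
proof (cases "length w = p \<and> set w \<subseteq> S")
  case True
  have "(\<Sum>C\<in>Pow S. (-1::'k::ring_1) ^ card C * (if length w = p \<and> set w \<subseteq> S - C then 1 else 0))
      = (\<Sum>C\<in>Pow S. if C \<inter> set w = {} then (-1::'k) ^ card C else 0)"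
    by (rule sum.cong) (use True in auto)
  also have "\<dots> = (\<Sum>C\<in>{C\<in>Pow S. C \<inter> set w = {}}. (-1::'k) ^ card C)"
    by (rule sum.inter_filter[symmetric]) (use assms in simp)
  also have "{C\<in>Pow S. C \<inter> set w = {}} = Pow (S - set w)" by auto
  also have "(\<Sum>C\<in>Pow (S - set w). (-1::'k) ^ card C) = (if S - set w = {} then 1 else 0)"
    by (rule alt_sum) (use assms in simp)
  finally show ?thesis using True by auto
next
  case False
  then show ?thesis by (intro trans[OF sum.neutral]) auto
qed

lemma lhs_eval:
  "S_poly p w = (if length w = p \<and> set w = {1..p} then (1::'k::field) else 0)"
proof -
  let ?L = "[1..<p+1]" and ?S = "{1..p}"
  have "S_poly p w = (\<Sum>\<sigma>\<in>{\<sigma>. \<sigma> permutes ?S}. if w = map \<sigma> ?L then (1::'k) else 0)"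
    by (simp add: S_poly_def nc_monom_def)
  also have "\<dots> = (if length w = p \<and> set w = ?S then 1 else 0)"
  proof (cases "length w = p \<and> set w = ?S")
    case True
    define s0 where "s0 = (\<lambda>x. if x \<in> ?S then w ! (x - 1) else x)"
    have img: "s0 ` ?S = set w"
    proof
      show "s0 ` ?S \<subseteq> set w"
      proof
        fix y assume "y \<in> s0 ` ?S"
        then obtain x where "x \<in> ?S" "y = s0 x" by auto
        then have "y = w ! (x - 1)" "x - 1 < length w" using True by (auto simp: s0_def)
        then show "y \<in> set w" by simp
      qed
      show "set w \<subseteq> s0 ` ?S"
      proof
        fix y assume "y \<in> set w"
        then obtain k where k: "k < length w" "w ! k = y" by (auto simp: in_set_conv_nth)
        then have "Suc k \<in> ?S" "s0 (Suc k) = y" using True by (auto simp: s0_def)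
        then show "y \<in> s0 ` ?S" by force
      qed
    qed
    have perm: "s0 permutes ?S"
    proof (rule bij_imp_permutes)
      have "inj_on s0 ?S"
        using img True by (simp add: inj_on_iff_eq_card)
      then show "bij_betw s0 ?S ?S" using img True by (simp add: bij_betw_def)
      fix x assume "x \<notin> ?S"
      then show "s0 x = x" unfolding s0_def by (rule if_not_P)
    qed
    have mp: "map s0 ?L = w"
    proof (rule nth_equalityI)
      show "length (map s0 ?L) = length w" using True by simp
      fix i assume "i < length (map s0 ?L)"
      then have i: "i < p" by (simp del: upt_Suc)
      have "?L ! i = Suc i" using i by (simp del: upt_Suc add: nth_upt)
      moreover have "Suc i \<in> ?S" using i by simp
      ultimately show "map s0 ?L ! i = w ! i" using i by (simp del: upt_Suc add: s0_def)
    qed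
    have iff: "(w = map \<sigma> ?L) \<longleftrightarrow> \<sigma> = s0" if "\<sigma> permutes ?S" for \<sigma>
    proof
      assume h: "w = map \<sigma> ?L"
      show "\<sigma> = s0"
      proof
        fix x show "\<sigma> x = s0 x"
        proof (cases "x \<in> ?S")
          case True
          then have xl: "x - 1 < length ?L" by (simp del: upt_Suc) linarith
          have "w ! (x - 1) = \<sigma> (?L ! (x - 1))" using h nth_map[OF xl, of \<sigma>] by (simp only:)
          moreover have "?L ! (x - 1) = x" using True by (simp del: upt_Suc add: nth_upt)
          ultimately show ?thesis using True by (simp add: s0_def)
        next
          case False
          then have "s0 x = x" unfolding s0_def by (rule if_not_P)
          then show ?thesis using permutes_not_in[OF that False] by simp
        qed
      qed
    qed (use mp in simp)
    have "(\<Sum>\<sigma>\<in>{\<sigma>. \<sigma> permutes ?S}. if w = map \<sigma> ?L then (1::'k) else 0)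
        = (\<Sum>\<sigma>\<in>{\<sigma>. \<sigma> permutes ?S}. if \<sigma> = s0 then (1::'k) else 0)"
      by (rule sum.cong) (use iff in auto)
    also have "\<dots> = 1" using perm finite_permutations[of ?S] by (simp add: sum.delta)
    finally show ?thesis using True by simp
  next
    case False
    have "\<not> (w = map \<sigma> ?L)" if "\<sigma> permutes ?S" for \<sigma>
    proof
      assume h: "w = map \<sigma> ?L"
      then have "length w = p" by simp
      moreover have "set w = ?S" using h permutes_image[OF that] by (simp del: upt_Suc add: atLeastLessThanSuc_atLeastAtMost)
      ultimately show False using False by simp
    qed
    then show ?thesis using False by (intro trans[OF sum.neutral]) auto
  qed
  finally show ?thesis .
qed

lemma T_sum:
  assumes "T_space V" "finite I" "\<And>i. i \<in> I \<Longrightarrow> g i \<in> V"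
  shows "(\<lambda>w. \<Sum>i\<in>I. g i w) \<in> V"
  using assms(2,3)
proof (induction I rule: finite_induct)
  case empty
  then show ?case using assms(1) by (simp add: T_space_def nc_zero_def)
next
  case (insert x F)
  then have "nc_add (g x) (\<lambda>w. \<Sum>i\<in>F. g i w) \<in> V" using assms(1) by (simp add: T_space_def)
  then show ?case using insert by (simp add: nc_add_def)
qed

lemma S_in:
  assumes V: "T_space V" and x: "(x1_pow p :: nat list \<Rightarrow> 'k::field) \<in> V"
  shows "(S_poly p :: nat list \<Rightarrow> 'k) \<in> V"
proof -
  let ?S = "{1..p}"
  let ?g = "\<lambda>C. nc_smult ((-1::'k) ^ card C) (subst_map (RC (?S - C)) (x1_pow p :: nat list \<Rightarrow> 'k))"
  have "?g C \<in> V" for C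
  proof -
    have "nc_endo (subst_map (RC (?S - C)) :: (nat list \<Rightarrow> 'k) \<Rightarrow> _)"
      by (rule subst_endo[OF RC_fin1 RC_fin2]) simp
    then have "subst_map (RC (?S - C)) (x1_pow p :: nat list \<Rightarrow> 'k) \<in> V"
      using V x unfolding T_space_def by blast
    then show ?thesis using V unfolding T_space_def by blast
  qed
  then have "(\<lambda>w. \<Sum>C\<in>Pow ?S. ?g C w) \<in> V" by (intro T_sum[OF V]) auto
  moreover have "(\<lambda>w. \<Sum>C\<in>Pow ?S. ?g C w) = S_poly p"
  proof
    fix w
    have "(\<Sum>C\<in>Pow ?S. ?g C w) = (\<Sum>C\<in>Pow ?S. (-1::'k) ^ card C * (if length w = p \<and> set w \<subseteq> ?S - C then 1 else 0))"
      by (simp add: nc_smult_def subst_x1)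
    also have "\<dots> = (if length w = p \<and> set w = ?S then 1 else 0)"
      by (rule rhs_eval) simp
    also have "\<dots> = S_poly p w" by (simp add: lhs_eval)
    finally show "(\<Sum>C\<in>Pow ?S. ?g C w) = S_poly p w" .
  qed
  ultimately show ?thesis by simp
qed

theorem corollary4p1:
  fixes p :: nat
  assumes "prime p" and "CHAR('k::field) = p"
  shows "T_gen (S_poly p :: nat list \<Rightarrow> 'k) \<subseteq> T_gen (x1_pow p :: nat list \<Rightarrow> 'k)"
  unfolding T_gen_def
proof (rule Inter_greatest)
  fix V :: "(nat list \<Rightarrow> 'k) set" assume "V \<in> {V. T_space V \<and> x1_pow p \<in> V}"
  then have "V \<in> {V. T_space V \<and> S_poly p \<in> V}" using S_in by blast
  then show "\<Inter> {V. T_space V \<and> S_poly p \<in> V} \<subseteq> V" by blast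
qed

end
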